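(* For every integer $r\geq 2$, $$\sum_{M\geq1}h_r(M)z^M=\frac{z+z^2+\cdots+z^{r-1}}{1-z-z^2-\cdots-z^r}.$$
   Context: The perimeter of a nonempty partition $\lambda$ with largest part $\lambda_1$ and $\ell(\lambda)$ parts is $\lambda_1+\ell(\lambda)-1$. For $r\geq2$, $h_r(M)$ is the number of partitions with perimeter $M$ in which every part value occurs fewer than $r$ times. *)

theory Defs
  imports Main "HOL-Computational_Algebra.Formal_Power_Series"
begin

definition is_partition :: "nat list \<Rightarrow> bool" where
  "is_partition xs \<longleftrightarrow> sorted_wrt (\<ge>) xs \<and> (\<forall>x\<in>set xs. 0 < x)"

definition perimeter :: "nat list \<Rightarrow> nat" where
  "perimeter xs = Max (set xs) + length xs - 1"

definition h :: "nat \<Rightarrow> nat \<Rightarrow> nat" where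
  "h r M = card {xs. is_partition xs \<and> xs \<noteq> [] \<and> perimeter xs = M
                     \<and> (\<forall>v. count_list xs v < r)}"

end

theory Submission
  imports Defs
begin

definition PP :: "nat \<Rightarrow> nat \<Rightarrow> nat list set" where
  "PP r M = {xs. is_partition xs \<and> xs \<noteq> [] \<and> perimeter xs = M \<and> (\<forall>v. count_list xs v < r)}"

lemma h_PP: "h r M = card (PP r M)" by (simp add: h_def PP_def)

lemma Max_hd: "sorted_wrt (\<ge>) xs \<Longrightarrow> xs \<noteq> [] \<Longrightarrow> Max (set xs) = hd xs"
  by (cases xs) (auto intro!: Max_eqI)

lemma perim_hd: "sorted_wrt (\<ge>) xs \<Longrightarrow> xs \<noteq> [] \<Longrightarrow> perimeter xs = hd xs + length xs - 1"
  by (simp add: perimeter_def Max_hd)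

lemma PP_finite: "finite (PP r M)"
proof (rule finite_subset[OF _ finite_lists_length_le[of "{0..M}" M]])
  show "PP r M \<subseteq> {xs. set xs \<subseteq> {0..M} \<and> length xs \<le> M}"
  proof
    fix xs assume "xs \<in> PP r M"
    hence p: "sorted_wrt (\<ge>) xs" "\<forall>x\<in>set xs. 0 < x" "xs \<noteq> []" "perimeter xs = M"
      by (auto simp: PP_def is_partition_def)
    have hx: "\<forall>x\<in>set xs. x \<le> hd xs" using p(1,3) by (cases xs) auto
    have "hd xs > 0" using p(2,3) by (cases xs) auto
    thus "xs \<in> {xs. set xs \<subseteq> {0..M} \<and> length xs \<le> M}"
      using perim_hd[OF p(1,3)] p(4) hx by (cases xs) force+
  qed
qed simp

lemma PP0: "PP r 0 = {}"
proof -
  { fix xs assume "xs \<in> PP r 0"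
    hence p: "sorted_wrt (\<ge>) xs" "\<forall>x\<in>set xs. 0 < x" "xs \<noteq> []" "perimeter xs = 0"
      by (auto simp: PP_def is_partition_def)
    have False using perim_hd[OF p(1,3)] p(2-4) by (cases xs) auto }
  thus ?thesis by blast
qed

lemma count_map_Suc0: "count_list (map Suc zs) 0 = 0"
  by (induction zs) auto
lemma count_map_Suc: "count_list (map Suc zs) (Suc v) = count_list zs v"
  by (induction zs) auto
lemma count_rep: "count_list (replicate m a) v = (if v = a then m else 0)"
  by (induction m) auto

lemma split_part: "sorted_wrt (\<ge>) (xs::nat list) \<Longrightarrow>
   xs = filter (\<lambda>x. 1 < x) xs @ filter (\<lambda>x. \<not> 1 < x) xs"
proof (induction xs)
  case (Cons a xs)
  show ?case
  proof (cases "1 < a")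
    case True thus ?thesis using Cons by auto
  next
    case False
    have "\<forall>x\<in>set xs. \<not> 1 < x"
    proof
      fix x assume "x \<in> set xs"
      hence "x \<le> a" using Cons.prems by auto
      thus "\<not> 1 < x" using False by linarith
    qed
    hence "filter (\<lambda>x. 1 < x) xs = []" "filter (\<lambda>x. \<not> 1 < x) xs = xs" by auto
    thus ?thesis using False by simp
  qed
qed simp

lemma filter_ones: "\<forall>x\<in>set xs. 0 < x \<Longrightarrow>
   filter (\<lambda>x. \<not> 1 < (x::nat)) xs = replicate (count_list xs 1) 1"
  by (induction xs) auto

definition FF :: "nat \<Rightarrow> nat list \<Rightarrow> nat list" where
  "FF m zs = map Suc zs @ replicate m 1"

definition DD :: "nat \<Rightarrow> nat \<Rightarrow> nat \<Rightarrow> nat list set" where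
  "DD r m M = PP r (M - m - 1) \<union> (if M = m \<and> 0 < m then {[]} else {})"

lemma FF_inj: "inj (FF m)"
  by (rule injI) (simp add: FF_def)

lemma map_Suc_pred: "\<forall>x\<in>set ys. 0 < x \<Longrightarrow> map Suc (map (\<lambda>x. x - 1) ys) = ys"
  by (induction ys) auto

lemma PP_pos: "xs \<in> PP r K \<Longrightarrow> K \<ge> 1"
  using PP0[of r] by (cases K) auto

lemma sorted_rep: "sorted_wrt (\<ge>) (replicate m (a::nat))"
  by (induction m) auto

lemma FF_in: assumes "zs \<in> PP r K" "m < r"
  shows "FF m zs \<in> PP r (K + m + 1)" "count_list (FF m zs) 1 = m"
proof -
  from assms(1) have p: "sorted_wrt (\<ge>) zs" "\<forall>x\<in>set zs. 0 < x" "zs \<noteq> []" "perimeter zs = K"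
     "\<forall>v. count_list zs v < r"
    by (auto simp: PP_def is_partition_def)
  have s: "sorted_wrt (\<ge>) (FF m zs)"
    using p(1,2) by (auto simp: FF_def sorted_wrt_append sorted_wrt_map sorted_rep)
  have ne: "FF m zs \<noteq> []" using p(3) by (simp add: FF_def)
  have hd: "hd (FF m zs) = Suc (hd zs)" using p(3) by (cases zs) (auto simp: FF_def)
  have hz: "hd zs > 0" using p(2,3) by (cases zs) auto
  have per: "perimeter (FF m zs) = K + m + 1"
    using perim_hd[OF s ne] perim_hd[OF p(1,3)] p(4) hd hz p(3)
    by (cases zs) (auto simp: FF_def)
  have c: "count_list (FF m zs) v < r" for v
  proof (cases v)
    case 0 thus ?thesis using assms(2) by (simp add: FF_def count_map_Suc0 count_rep)
  next
    have z0: "count_list zs 0 = 0" using p(2) by (auto simp: count_list_0_iff)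
    case (Suc w) thus ?thesis using assms(2) p(5) z0
      by (auto simp: FF_def count_map_Suc count_rep)
  qed
  show "FF m zs \<in> PP r (K + m + 1)"
    using s ne per c by (auto simp: PP_def is_partition_def FF_def)
  show "count_list (FF m zs) 1 = m"
    using count_map_Suc[of zs 0] p(2) by (auto simp: FF_def count_rep count_list_0_iff)
qed

lemma B_eq: assumes "m < r"
  shows "{xs \<in> PP r M. count_list xs 1 = m} = FF m ` DD r m M"
proof (rule set_eqI, rule iffI)
  fix xs assume "xs \<in> {xs \<in> PP r M. count_list xs 1 = m}"
  hence p: "sorted_wrt (\<ge>) xs" "\<forall>x\<in>set xs. 0 < x" "xs \<noteq> []" "perimeter xs = M"
     "\<forall>v. count_list xs v < r" "count_list xs 1 = m"
    by (auto simp: PP_def is_partition_def)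
  define ys where "ys = filter (\<lambda>x. 1 < x) xs"
  define zs where "zs = map (\<lambda>x. x - 1) ys"
  have xs: "xs = ys @ replicate m 1"
    using split_part[OF p(1)] filter_ones[OF p(2)] p(6) by (simp add: ys_def)
  have ys: "map Suc zs = ys" unfolding zs_def by (rule map_Suc_pred) (auto simp: ys_def)
  have xsF: "xs = FF m zs" using xs ys by (simp add: FF_def)
  show "xs \<in> FF m ` DD r m M"
  proof (cases "zs = []")
    case True
    hence "xs = replicate m 1" using xsF by (simp add: FF_def)
    moreover have "perimeter (replicate m 1) = m" if "m > 0" using that
      by (simp add: perimeter_def)
    ultimately have "M = m \<and> 0 < m" using p(3,4) by (cases m) auto
    thus ?thesis using xsF True by (auto simp: DD_def)
  next
    case False
    have sy: "sorted_wrt (\<ge>) ys" using p(1) unfolding ys_def by (simp add: sorted_wrt_filter)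
    have sz: "sorted_wrt (\<ge>) zs" using sy unfolding zs_def by (simp add: sorted_wrt_map) (erule sorted_wrt_mono_rel[rotated], simp)
    have pz: "\<forall>x\<in>set zs. 0 < x" unfolding zs_def ys_def by auto
    have cz: "count_list zs v < r" for v
    proof -
      have "count_list zs v = count_list ys (Suc v)" using count_map_Suc[of zs v] ys by simp
      also have "\<dots> \<le> count_list xs (Suc v)" using xs by (metis count_list_append le_add1)
      finally show ?thesis using p(5) by (meson le_less_trans)
    qed
    have "hd xs = Suc (hd zs)" using xsF False by (cases zs) (auto simp: FF_def)
    moreover have "length xs = length zs + m" using xsF by (simp add: FF_def)
    moreover have "hd zs > 0" using pz False by (cases zs) auto
    ultimately have "perimeter zs = M - m - 1"
      using perim_hd[OF p(1,3)] perim_hd[OF sz False] p(4) False by (cases zs) auto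
    hence "zs \<in> PP r (M - m - 1)" using sz pz False cz by (auto simp: PP_def is_partition_def)
    thus ?thesis using xsF by (auto simp: DD_def)
  qed
next
  fix xs assume "xs \<in> FF m ` DD r m M"
  then obtain zs where xs: "xs = FF m zs" and zs: "zs \<in> DD r m M" by auto
  show "xs \<in> {xs \<in> PP r M. count_list xs 1 = m}"
  proof (cases "zs \<in> PP r (M - m - 1)")
    case True
    have "M - m - 1 \<ge> 1" using PP_pos[OF True] .
    hence "M - m - 1 + m + 1 = M" by simp
    thus ?thesis using FF_in[OF True assms] xs by simp
  next
    case False
    hence "zs = [] \<and> M = m \<and> 0 < m" using zs by (auto simp: DD_def split: if_splits)
    hence "xs = replicate m 1" "M = m" "0 < m" using xs by (auto simp: FF_def)
    thus ?thesis using assms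
      by (auto simp: PP_def is_partition_def perimeter_def count_rep sorted_rep)
  qed
qed

lemma card_B: assumes "m < r"
  shows "card {xs \<in> PP r M. count_list xs 1 = m} = card (PP r (M - m - 1)) + (if M = m \<and> 0 < m then 1 else 0)"
proof -
  have "[] \<notin> PP r (M - m - 1)" by (simp add: PP_def)
  hence "card (DD r m M) = card (PP r (M - m - 1)) + (if M = m \<and> 0 < m then 1 else 0)"
    by (simp add: DD_def PP_finite PP0)
  thus ?thesis using B_eq[OF assms] card_image[OF inj_on_subset[OF FF_inj]] by simp
qed

lemma recur: "card (PP r M) = (\<Sum>m<r. card (PP r (M - m - 1)) + (if M = m \<and> 0 < m then 1 else 0))"
proof -
  have "PP r M = (\<Union>m\<in>{..<r}. {xs \<in> PP r M. count_list xs 1 = m})"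
    by (auto simp: PP_def)
  moreover have "card (\<Union>m\<in>{..<r}. {xs \<in> PP r M. count_list xs 1 = m}) = (\<Sum>m<r. card {xs \<in> PP r M. count_list xs 1 = m})"
    by (rule card_UN_disjoint) (auto simp: PP_finite)
  ultimately have "card (PP r M) = (\<Sum>m<r. card {xs \<in> PP r M. count_list xs 1 = m})"
    by simp
  thus ?thesis using card_B by simp
qed

theorem mainTheorem12:
  fixes r :: nat
  assumes "r \<ge> 2"
  shows "(Abs_fps (\<lambda>M. if M \<ge> 1 then of_nat (h r M) else 0) :: real fps)
           = (\<Sum>i=1..r-1. fps_X ^ i) / (1 - (\<Sum>i=1..r. fps_X ^ i))"
proof -
  define G :: "real fps" where "G = Abs_fps (\<lambda>M. of_nat (h r M))"
  define S :: "real fps" where "S = (\<Sum>i=1..r. fps_X ^ i)"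
  define Q :: "real fps" where "Q = (\<Sum>i=1..r-1. fps_X ^ i)"
  have h0: "h r 0 = 0" by (simp add: h_PP PP0)
  have L: "Abs_fps (\<lambda>M. if M \<ge> 1 then of_nat (h r M) else 0) = G"
    unfolding G_def by (rule fps_ext) (case_tac n, auto simp: h0)
  have rec: "real (h r n) = (\<Sum>i=1..r. if n < i then 0 else real (h r (n - i)))
        + (if 1 \<le> n \<and> n \<le> r - 1 then 1 else 0)" for n
  proof -
    have "h r n = (\<Sum>m<r. h r (n - m - 1) + (if n = m \<and> 0 < m then 1 else 0))"
      using recur[of r n] by (simp add: h_PP)
    also have "\<dots> = (\<Sum>m<r. h r (n - m - 1)) + (\<Sum>m<r. (if n = m \<and> 0 < m then 1 else 0))"
      by (simp add: sum.distrib)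
    also have "(\<Sum>m<r. (if n = m \<and> 0 < m then 1 else 0)) = (if 1 \<le> n \<and> n \<le> r - 1 then 1 else (0::nat))"
    proof -
      have "{..<r} \<inter> {m. n = m \<and> 0 < m} = (if 1 \<le> n \<and> n \<le> r - 1 then {n} else {})"
        using assms by auto
      thus ?thesis by (simp add: sum.If_cases)
    qed
    also have "(\<Sum>m<r. h r (n - m - 1)) = (\<Sum>i=1..r. h r (n - i))"
    proof -
      have "(\<Sum>i=1..r. h r (n - i)) = (\<Sum>m<r. h r (n - Suc m))"
        by (subst image_Suc_lessThan[symmetric]) (simp add: sum.reindex)
      thus ?thesis by simp
    qed
    also have "(\<Sum>i=1..r. h r (n - i)) = (\<Sum>i=1..r. if n < i then 0 else h r (n - i))"
      by (rule sum.cong) (auto simp: h0)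
    finally have H: "h r n = (\<Sum>i=1..r. if n < i then 0 else h r (n - i)) + (if 1 \<le> n \<and> n \<le> r - 1 then 1 else 0)" .
    show ?thesis unfolding H of_nat_add of_nat_sum
      by (intro arg_cong2[where f="(+)"] sum.cong) auto
  qed
  have Gn: "fps_nth G k = real (h r k)" for k unfolding G_def by simp
  have eq: "G * (1 - S) = Q"
  proof (rule fps_ext)
    fix n
    have "fps_nth (G * (1 - S)) n = fps_nth G n - (\<Sum>i=1..r. fps_nth (G * fps_X ^ i) n)"
      by (simp add: S_def algebra_simps sum_distrib_left fps_sum_nth)
    also have "\<dots> = (if 1 \<le> n \<and> n \<le> r - 1 then 1 else 0)"
      using rec[of n] unfolding fps_X_power_mult_right_nth Gn by simp
    also have "\<dots> = fps_nth Q n"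
      by (auto simp: Q_def fps_sum_nth)
    finally show "fps_nth (G * (1 - S)) n = fps_nth Q n" .
  qed
  have nz: "1 - S \<noteq> 0"
  proof
    assume "1 - S = 0"
    hence "fps_nth (1 - S) 0 = 0" by simp
    moreover have "fps_nth (1 - S) 0 = 1" by (simp add: S_def fps_sum_nth)
    ultimately show False by simp
  qed
  have "Q / (1 - S) = G" using nz by (simp add: eq[symmetric])
  thus ?thesis using L by (simp add: Q_def S_def)
qed

end
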